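(* Assume Schinzel's Hypothesis H. Let $p$ be a prime with $p\equiv 1\pmod 8$ and $p\equiv 2\pmod 3$, and let $\mathfrak{C}_p$ be the set of septuples $(A,B,C,D,E,F,G)\in\mathbb{Z}^7$ of the parametrized form described below that satisfy (A1), (A3), (A4), (A5), (A7), and (A6) for every integer $n\ge1$. Then for every positive integer $n$ there exist infinitely many septuples in $\mathfrak{C}_p$ satisfying Hypothesis FM with respect to $(p,n)$. Parametrized form: there are nonzero odd integers $\lambda,\gamma$ with $\gcd(\lambda,3\gamma)=\gcd(p,3\gamma)=\gcd(p,\lambda)=1$, nonzero integers $\epsilon_0,\delta_0$ with $p\lambda^2\epsilon_0+9\gamma^2\delta_0=1$, and integers $\mu,t_0,F_0$ with $A=\frac{p\lambda^2-9\gamma^2}{2}$, $B=2pF_0^2(\delta_0-\epsilon_0-\mu(p\lambda^2+9\gamma^2))+(p\lambda^2+9\gamma^2)t_0F_0$, $C=2pF_0^2(\delta_0+\epsilon_0-\mu(p\lambda^2-9\gamma^2))+(p\lambda^2-9\gamma^2)t_0F_0$, $D=\frac{p\lambda^2+9\gamma^2}{2}$, $E=F_0(2pF_0(\epsilon_0+9\mu\gamma^2)-9\gamma^2t_0)(2F_0(\delta_0-p\mu\lambda^2)+\lambda^2t_0)$, $F=2F_0$, $G=3\lambda\gamma$.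
   Context: Schinzel's Hypothesis H: if $F_1,\dots,F_k\in\mathbb{Z}[x]$ are nonconstant, irreducible over $\mathbb{Q}$, with positive leading coefficients, and the product $\prod_i F_i$ has no fixed prime divisor (no prime $q$ divides $\prod_iF_i(m)$ for all integers $m$), then there are infinitely many positive integers $x$ such that $F_1(x),\dots,F_k(x)$ are simultaneously prime. $v_l$ is the $l$-adic valuation. Conditions on $(A,B,C,D,E,F,G)\in\mathbb{Z}^7$ (for a prime $p\equiv1\pmod 8$ and integer $n\ge1$): (A1) $B^2 - C^2 + 2pEF = 0$, $2AB - 2CD + pF^2 = 0$, $A^2 - D^2 + pG^2 = 0$; (A2) for every odd prime $l$ with $l\ne 3$, $l\ne p$, $l\mid E$: $p$ is a square in $\mathbb{Q}_l^\times$ or $v_l(E)-v_l(G)<6n$; (A3) $\gcd(A,D,G)=1$, $E\not\equiv 0 \pmod p$, $G\not\equiv 0\pmod p$; (A4) for every odd prime $l$ with $l\ne 3$, $l\ne p$, $l \mid \gcd(AC-BD,\ DE-CF,\ AE-BF)$: $p$ is a square in $\mathbb{Q}_l^\times$; (A5) there is an integer $H$ with $G - EH^6\equiv 0 \pmod p$ such that $A+\zeta BH^4$ is a quadratic non-residue in $\mathbb{F}_p^\times$ for every cube root of unity $\zeta\in\mathbb{F}_p^\times$; (A6) $v_3(E)-v_3(G)<6n$; (A7) $A+B\not\equiv 0\pmod 3$ and $G\equiv 0 \pmod 3$. The septuple (not all zero) satisfies Hypothesis FM with respect to $(p,n)$ if (A1)–(A5) hold and, in case $3$ is a quadratic non-residue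 in $\mathbb{F}_p^\times$, also (A6) and (A7). *)

theory Defs
  imports "HOL-Number_Theory.Number_Theory" "HOL-Computational_Algebra.Computational_Algebra"
begin

type_synonym septuple = "int \<times> int \<times> int \<times> int \<times> int \<times> int \<times> int"

definition SchinzelH :: bool where
  "SchinzelH \<longleftrightarrow>
    (\<forall>Fs :: int poly list.
      (\<forall>F \<in> set Fs. degree F > 0 \<and> irreducible (map_poly (of_int :: int \<Rightarrow> rat) F)
                      \<and> lead_coeff F > 0)
      \<and> \<not> (\<exists>q::int. prime q \<and> (\<forall>m::int. q dvd (\<Prod>F\<leftarrow>Fs. poly F m)))
      \<longrightarrow> infinite {x::int. x > 0 \<and> (\<forall>F \<in> set Fs. prime (poly F x))})"

text \<open>The integer a is a square in Q_l^x (l prime): a is nonzero and a square in Z_l,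
  i.e. a is a square modulo every power of l.\<close>
definition padic_square :: "int \<Rightarrow> int \<Rightarrow> bool" where
  "padic_square l a \<longleftrightarrow> a \<noteq> 0 \<and> (\<forall>k::nat. \<exists>x::int. [x^2 = a] (mod l^k))"

definition QNR :: "int \<Rightarrow> int \<Rightarrow> bool" where
  "QNR p a \<longleftrightarrow> \<not> [a = 0] (mod p) \<and> \<not> QuadRes p a"

definition A1 :: "int \<Rightarrow> septuple \<Rightarrow> bool" where
  "A1 p s = (case s of (A,B,C,D,E,F,G) \<Rightarrow>
     B^2 - C^2 + 2*p*E*F = 0 \<and> 2*A*B - 2*C*D + p*F^2 = 0 \<and> A^2 - D^2 + p*G^2 = 0)"

definition A2 :: "int \<Rightarrow> nat \<Rightarrow> septuple \<Rightarrow> bool" where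
  "A2 p n s = (case s of (A,B,C,D,E,F,G) \<Rightarrow>
     (\<forall>l::int. prime l \<and> odd l \<and> l \<noteq> 3 \<and> l \<noteq> p \<and> l dvd E \<longrightarrow>
        padic_square l p \<or> int (multiplicity l E) - int (multiplicity l G) < 6 * int n))"

definition A3 :: "int \<Rightarrow> septuple \<Rightarrow> bool" where
  "A3 p s = (case s of (A,B,C,D,E,F,G) \<Rightarrow>
     gcd (gcd A D) G = 1 \<and> \<not> [E = 0] (mod p) \<and> \<not> [G = 0] (mod p))"

definition A4 :: "int \<Rightarrow> septuple \<Rightarrow> bool" where
  "A4 p s = (case s of (A,B,C,D,E,F,G) \<Rightarrow>
     (\<forall>l::int. prime l \<and> odd l \<and> l \<noteq> 3 \<and> l \<noteq> p
        \<and> l dvd gcd (gcd (A*C - B*D) (D*E - C*F)) (A*E - B*F) \<longrightarrow> padic_square l p))"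

text \<open>Cube roots of unity in F_p^x are represented by integers z with z^3 = 1 mod p.\<close>
definition A5 :: "int \<Rightarrow> septuple \<Rightarrow> bool" where
  "A5 p s = (case s of (A,B,C,D,E,F,G) \<Rightarrow>
     (\<exists>H::int. [G - E*H^6 = 0] (mod p) \<and>
        (\<forall>z::int. [z^3 = 1] (mod p) \<longrightarrow> QNR p (A + z*B*H^4))))"

definition A6 :: "nat \<Rightarrow> septuple \<Rightarrow> bool" where
  "A6 n s = (case s of (A,B,C,D,E,F,G) \<Rightarrow>
     int (multiplicity 3 E) - int (multiplicity 3 G) < 6 * int n)"

definition A7 :: "septuple \<Rightarrow> bool" where
  "A7 s = (case s of (A,B,C,D,E,F,G) \<Rightarrow>
     \<not> [A + B = 0] (mod 3) \<and> [G = 0] (mod 3))"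

definition HypFM :: "int \<Rightarrow> nat \<Rightarrow> septuple \<Rightarrow> bool" where
  "HypFM p n s \<longleftrightarrow> s \<noteq> (0,0,0,0,0,0,0) \<and> A1 p s \<and> A2 p n s \<and> A3 p s \<and> A4 p s \<and> A5 p s
     \<and> (QNR p 3 \<longrightarrow> A6 n s \<and> A7 s)"

definition param_form :: "int \<Rightarrow> septuple \<Rightarrow> bool" where
  "param_form p s \<longleftrightarrow> (\<exists>lam gam eps0 del0 mu t0 F0 :: int.
     lam \<noteq> 0 \<and> gam \<noteq> 0 \<and> odd lam \<and> odd gam \<and>
     gcd lam (3*gam) = 1 \<and> gcd p (3*gam) = 1 \<and> gcd p lam = 1 \<and>
     eps0 \<noteq> 0 \<and> del0 \<noteq> 0 \<and> p*lam^2*eps0 + 9*gam^2*del0 = 1 \<and>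
     s = ((p*lam^2 - 9*gam^2) div 2,
          2*p*F0^2*(del0 - eps0 - mu*(p*lam^2 + 9*gam^2)) + (p*lam^2 + 9*gam^2)*t0*F0,
          2*p*F0^2*(del0 + eps0 - mu*(p*lam^2 - 9*gam^2)) + (p*lam^2 - 9*gam^2)*t0*F0,
          (p*lam^2 + 9*gam^2) div 2,
          F0*(2*p*F0*(eps0 + 9*mu*gam^2) - 9*gam^2*t0)*(2*F0*(del0 - p*mu*lam^2) + lam^2*t0),
          2*F0,
          3*lam*gam))"

definition Cp :: "int \<Rightarrow> septuple set" where
  "Cp p = {s. param_form p s \<and> A1 p s \<and> A3 p s \<and> A4 p s \<and> A5 p s \<and> A7 s
              \<and> (\<forall>n::nat. n \<ge> 1 \<longrightarrow> A6 n s)}"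

end

theory Submission
  imports Defs
begin


lemma three_QNR:
  fixes p :: int
  assumes "prime p" "p mod 8 = 1" "p mod 3 = 2"
  shows "Legendre 3 p = -1"
proof -
  have p2: "2 < p" using assms prime_gt_1_int[of p] by presburger
  have "p \<noteq> 3" using assms by auto
  have L: "Legendre p 3 * Legendre 3 p = (- 1) ^ nat ((p - 1) div 2 * ((3 - 1) div 2))"
    by (rule Quadratic_Reciprocity_int) (use assms p2 \<open>p \<noteq> 3\<close> prime_nat_iff_prime in auto)
  define j where "j = p div 8"
  have j: "(p - 1) div 2 = 4*j" "j \<ge> 0" using assms p2 unfolding j_def by presburger+
  then have e: "nat ((p - 1) div 2 * ((3 - 1) div 2)) = 2 * nat (2*j)" by simp
  have "Legendre p 3 = -1"
  proof -
    have "\<not> [p = 0] (mod 3)" using assms by (simp add: cong_def)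
    moreover have "\<not> QuadRes 3 p"
    proof
      assume "QuadRes 3 p"
      then obtain y where "[y^2 = p] (mod 3)" unfolding QuadRes_def by blast
      then have "(y^2) mod 3 = 2" using assms by (simp add: cong_def)
      moreover have "(y^2) mod 3 = ((y mod 3)^2) mod 3" by (simp add: power_mod)
      moreover have "y mod 3 = 0 \<or> y mod 3 = 1 \<or> y mod 3 = 2" by presburger
      ultimately show False by auto
    qed
    ultimately show ?thesis unfolding Legendre_def by auto
  qed
  with L e show ?thesis by (simp add: power_mult)
qed

lemma roots:
  fixes p :: int
  assumes "prime p" "p mod 8 = 1" "p mod 3 = 2"
  shows "\<exists>i s. [i^2 = -1] (mod p) \<and> [s^2 = 2] (mod p)"
proof -
  have p2: "2 < p" using assms prime_gt_1_int[of p] by presburger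
  define N where "N = nat (p div 8)"
  have "int (8*N+1) = p" using assms p2 unfolding N_def by simp presburger
  then have "nat p = 8*N+1" by (metis nat_int)
  then have hN: "(nat p - 1) div 2 = 4 * N" by simp
  have "[Legendre 3 (int (nat p)) = 3 ^ ((nat p - 1) div 2)] (mod int (nat p))"
    by (rule euler_criterion) (use assms p2 prime_nat_iff_prime in auto)
  then have "[-1 = (3::int) ^ (4*N)] (mod p)" using three_QNR[OF assms] p2 hN by simp
  define z where "z = (3::int)^N"
  have z4: "[z^4 = -1] (mod p)" using \<open>[-1 = (3::int) ^ (4*N)] (mod p)\<close> unfolding z_def
    by (simp add: power_mult[symmetric] mult.commute cong_sym)
  then have d: "p dvd z^4 + 1" by (simp add: cong_iff_dvd_diff)
  have "[(z^2)^2 = -1] (mod p)" using z4 by (simp add: power_mult[symmetric])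
  moreover have "[(z - z^3)^2 = 2] (mod p)"
  proof -
    have "(z - z^3)^2 - 2 = (z^2 - 2) * (z^4 + 1)" by (simp add: eval_nat_numeral algebra_simps)
    then show ?thesis using d by (simp add: cong_iff_dvd_diff)
  qed
  ultimately show ?thesis by blast
qed

lemma cube_root_one:
  fixes p z :: int
  assumes "prime p" "p mod 3 = 2" "[z^3 = 1] (mod p)" and p2: "2 < p"
  shows "[z = 1] (mod p)"
proof -
  have nz: "\<not> [z = 0] (mod p)"
  proof
    assume "[z = 0] (mod p)"
    then have "[z^3 = 0^3] (mod p)" by (rule cong_pow)
    then have "[1 = 0] (mod p)" using assms(3) by (metis cong_sym cong_trans power_zero_numeral)
    then show False using p2 by (simp add: cong_def)
  qed
  have "[Legendre z (int (nat p)) = z ^ ((nat p - 1) div 2)] (mod int (nat p))"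
    by (rule euler_criterion) (use assms p2 prime_nat_iff_prime in auto)
  then have e: "[Legendre z p = z ^ ((nat p - 1) div 2)] (mod p)" using p2 by simp
  have "Legendre z p = 1 \<or> Legendre z p = -1" using nz unfolding Legendre_def by auto
  then have "(Legendre z p)^2 = 1" by auto
  moreover have "[(Legendre z p)^2 = (z ^ ((nat p - 1) div 2))^2] (mod p)" using e by (rule cong_pow)
  moreover have "(z ^ ((nat p - 1) div 2))^2 = z ^ (nat p - 1)"
  proof -
    have "odd (nat p)" using prime_odd_nat[of "nat p"] assms(1) p2 prime_nat_iff_prime by auto
    then obtain m where "nat p = 2*m+1" by (auto elim: oddE)
    then have "(nat p - 1) div 2 * 2 = nat p - 1" by simp
    then show ?thesis by (simp add: power_mult[symmetric])
  qed
  ultimately have f: "[z ^ (nat p - 1) = 1] (mod p)" by (metis cong_sym)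
  define K where "K = (nat p - 2) div 3"
  define M where "M = p div 3"
  have "int (3*nat M+2) = p" using assms p2 unfolding M_def by simp presburger
  then have "nat p = 3*nat M+2" by (metis nat_int)
  then have hK: "nat p - 1 = 3*K + 1" unfolding K_def by simp
  have "z ^ (nat p - 1) = (z^3)^K * z" unfolding hK by (simp add: power_mult[symmetric] power_add)
  moreover have "[(z^3)^K * z = 1^K * z] (mod p)" using assms(3) by (intro cong_mult cong_pow cong_refl)
  ultimately have "[z ^ (nat p - 1) = z] (mod p)" by simp
  with f show ?thesis by (metis cong_sym cong_trans)
qed

lemma qnr_main:
  fixes p a :: int
  assumes "prime p" "p mod 8 = 1" "p mod 3 = 2" "[2*a = -27] (mod p)"
  shows "\<not> [a = 0] (mod p) \<and> \<not> QuadRes p a"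
proof -
  have p2: "2 < p" using assms prime_gt_1_int[of p] by presburger
  have d4: "p dvd 2*a + 27" using assms(4) by (simp add: cong_iff_dvd_diff)
  have n3: "\<not> p dvd 3"
  proof
    assume "p dvd 3"
    then have "p \<le> 3" by (simp add: zdvd_imp_le)
    then show False using assms p2 by presburger
  qed
  have "\<not> [a = 0] (mod p)"
  proof
    assume "[a = 0] (mod p)"
    then have "p dvd a" by (simp add: cong_iff_dvd_diff)
    then have "p dvd 2*a + 27 - 2*a" using d4 by (intro dvd_diff) auto
    then have "p dvd 3^3" by simp
    then have "p dvd 3" using assms(1) prime_dvd_power by blast
    with n3 show False by simp
  qed
  moreover have "\<not> QuadRes p a"
  proof
    assume "QuadRes p a"
    then obtain y where "[y^2 = a] (mod p)" unfolding QuadRes_def by blast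
    then have d3: "p dvd y^2 - a" by (simp add: cong_iff_dvd_diff)
    obtain i s where "[i^2 = -1] (mod p)" "[s^2 = 2] (mod p)" using roots[OF assms(1-3)] by blast
    then have d1: "p dvd i^2 + 1" and d2: "p dvd s^2 - 2" by (simp_all add: cong_iff_dvd_diff)
    define v where "v = (p+1) div 3"
    have v3: "3*v = p + 1" unfolding v_def using assms by presburger
    define w where "w = i*s*y*v"
    have e1: "i^2*s^2*y^2 + 2*a = (i^2+1)*(s^2*y^2) - (s^2-2)*y^2 - 2*(y^2-a)"
      by (simp add: algebra_simps)
    have d5: "p dvd i^2*s^2*y^2 + 2*a" unfolding e1
      using dvd_diff[OF dvd_diff[OF dvd_mult2[OF d1] dvd_mult2[OF d2]] dvd_mult[OF d3]] .
    have d6: "p dvd 3*(3*v - 1)" using v3 by simp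
    have "p dvd (i^2*s^2*y^2 + 2*a)*v^2 - (2*a+27)*v^2 + 3*(3*v - 1)*(3*v+1)"
      using dvd_add[OF dvd_diff[OF dvd_mult2[OF d5] dvd_mult2[OF d4]] dvd_mult2[OF d6]] .
    moreover have "(i^2*s^2*y^2 + 2*a)*v^2 - (2*a+27)*v^2 + 3*(3*v - 1)*(3*v+1) = w^2 - 3"
      unfolding w_def by (simp add: algebra_simps power2_eq_square)
    ultimately have "[w^2 = 3] (mod p)" by (simp add: cong_iff_dvd_diff)
    then have "QuadRes p 3" unfolding QuadRes_def by blast
    then show False using three_QNR[OF assms(1-3)] unfolding Legendre_def by (auto split: if_splits)
  qed
  ultimately show ?thesis by blast
qed



lemma mult_prime_le1:
  fixes q l :: int
  assumes "prime q" "prime l"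
  shows "multiplicity l q \<le> 1"
proof -
  have "\<not> l^2 dvd q"
  proof
    assume h: "l^2 dvd q"
    then have "l dvd q" by (meson dvd_power dvd_trans zero_less_numeral)
    then have "l = q" using assms primes_dvd_imp_eq by blast
    with h have "q * q dvd q * 1" by (simp add: power2_eq_square)
    then have "q dvd 1" using assms(1) by (subst (asm) dvd_mult_cancel_left) auto
    then show False using assms(1) by auto
  qed
  moreover have "q \<noteq> 0" "\<not> is_unit l" using assms by auto
  ultimately have "multiplicity l q < 2" by (intro multiplicity_lessI)
  then show ?thesis by simp
qed

definition sept :: "int \<Rightarrow> int \<Rightarrow> septuple" where
  "sept p L = ((p - 9) div 2, -18 + (27+3*p)*L, 18 + (3*p-27)*L, (p+9) div 2, 9*L*(2 - 3*L), 6, 3)"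

lemma mult_E_le:
  fixes l L :: int
  assumes "prime l" "prime L" "prime (3*L - 2)"
  shows "multiplicity l (9*L*(2 - 3*L)) \<le> 4"
proof -
  have L0: "L \<noteq> 0" "2 - 3*L \<noteq> 0" using assms by auto
  have pe: "prime_elem l" using assms(1) by (rule prime_imp_prime_elem)
  have m9: "multiplicity l (9::int) = multiplicity l 3 + multiplicity l 3"
    using prime_elem_multiplicity_mult_distrib[OF pe, of 3 3] by simp
  have m2: "multiplicity l (2 - 3*L) = multiplicity l (3*L-2)"
    using multiplicity_uminus_right[of l "3*L-2"] by simp
  have "multiplicity l (9*L*(2 - 3*L)) = multiplicity l 9 + multiplicity l L + multiplicity l (2 - 3*L)"
    using L0 pe by (simp add: prime_elem_multiplicity_mult_distrib)
  also have "\<dots> = multiplicity l 3 + multiplicity l 3 + multiplicity l L + multiplicity l (3*L-2)"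
    using m9 m2 by simp
  also have "\<dots> \<le> 1 + 1 + 1 + 1"
    using mult_prime_le1[of 3 l] mult_prime_le1[of L l] mult_prime_le1[of "3*L-2" l] assms
    by (intro add_mono) auto
  finally show ?thesis by simp
qed

locale goodL =
  fixes p L u k :: int
  assumes pp: "prime p" and p8: "p mod 8 = 1" and p3: "p mod 3 = 2"
    and Lp: "prime L" and L2p: "prime (3*L - 2)" and hu: "3*L = 1 + p*u" and pk: "p = 2*k + 1"
begin

lemma Ak: "(p - 9) div 2 = k - 4" using pk by simp
lemma Dk: "(p + 9) div 2 = k + 5" using pk by simp
lemma p2: "2 < p" using pp p8 prime_gt_1_int[of p] by presburger
lemma n3: "\<not> p dvd 3"
proof
  assume "p dvd 3"
  then have "p \<le> 3" by (simp add: zdvd_imp_le)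
  then show False using p8 p2 by presburger
qed

lemma sA1: "A1 p (sept p L)"
proof -
  have "(-18 + (27+3*p)*L)^2 - (18 + (3*p-27)*L)^2 + 2*p*(9*L*(2 - 3*L))*6 = 0"
    by (simp add: algebra_simps power2_eq_square)
  moreover have "2*(k-4)*(-18 + (27+3*p)*L) - 2*(18 + (3*p-27)*L)*(k+5) + p*6^2 = 0"
    unfolding pk by (simp add: algebra_simps power2_eq_square)
  moreover have "(k-4)^2 - (k+5)^2 + p*3^2 = 0"
    unfolding pk by (simp add: algebra_simps power2_eq_square)
  ultimately show ?thesis unfolding A1_def sept_def Ak Dk by simp
qed

lemma Emod: "9*L*(2 - 3*L) = 3 - 3*p^2*u^2"
proof -
  have "9*L*(2 - 3*L) = 3*(3*L)*(2 - 3*L)" by simp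
  also have "\<dots> = 3*(1+p*u)*(1 - p*u)" unfolding hu by simp
  finally show ?thesis by (simp add: algebra_simps power2_eq_square)
qed

lemma sA3: "A3 p (sept p L)"
proof -
  have g: "gcd (gcd (k - 4) (k + 5)) 3 = 1"
  proof -
    define g where "g = gcd (gcd (k - 4) (k + 5)) 3"
    have h1: "g dvd k - 4" and h2: "g dvd k + 5" and "g dvd 3" unfolding g_def by (meson gcd_dvd1 gcd_dvd2 dvd_trans)+
    from dvd_add[OF h1 h2] have "g dvd (k - 4) + (k + 5)" .
    moreover have "(k - 4) + (k + 5) = p" using pk by simp
    ultimately have "g dvd p" by simp
    have "g \<ge> 0" unfolding g_def by simp
    have "g \<noteq> 0" unfolding g_def by simp
    have "g \<le> 3" using \<open>g dvd 3\<close> by (simp add: zdvd_imp_le)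
    have "g \<noteq> 2" using \<open>g dvd 3\<close> by auto
    have "\<not> 3 dvd p" using p3 by presburger
    then have "g \<noteq> 3" using \<open>g dvd p\<close> by auto
    show ?thesis using \<open>g \<ge> 0\<close> \<open>g \<noteq> 0\<close> \<open>g \<le> 3\<close> \<open>g \<noteq> 2\<close> \<open>g \<noteq> 3\<close>
      unfolding g_def[symmetric] by linarith
  qed
  have e: "\<not> [9*L*(2 - 3*L) = 0] (mod p)"
  proof
    assume "[9*L*(2 - 3*L) = 0] (mod p)"
    then have "p dvd 3 - 3*p^2*u^2" unfolding Emod by (simp add: cong_iff_dvd_diff)
    then have "p dvd 3 - 3*p^2*u^2 + p*(3*p*u^2)" by (intro dvd_add) auto
    then show False using n3 by (simp add: algebra_simps power2_eq_square)
  qed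
  have "\<not> [3 = 0] (mod p)" using n3 by (simp add: cong_iff_dvd_diff)
  then show ?thesis unfolding A3_def sept_def Ak Dk using g e by simp
qed

lemma sA4: "A4 p (sept p L)"
proof -
  define B where "B = -18 + (27+3*p)*L"
  define C where "C = 18 + (3*p-27)*L"
  define E where "E = 9*L*(2 - 3*L)"
  have X1: "(k-4)*C - B*(k+5) = 18*p*(1 - 3*L)"
    unfolding B_def C_def pk by (simp add: algebra_simps)
  have X23: "((k+5)*E - C*6) - ((k-4)*E - B*6) = 27*(3*L-1)*(5 - 3*L) - 81"
    unfolding B_def C_def E_def pk by (simp add: algebra_simps)
  have "\<not> (prime l \<and> odd l \<and> l \<noteq> 3 \<and> l \<noteq> p \<and>
      l dvd gcd (gcd ((k-4)*C - B*(k+5)) ((k+5)*E - C*6)) ((k-4)*E - B*6))" for l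
  proof
    assume h: "prime l \<and> odd l \<and> l \<noteq> 3 \<and> l \<noteq> p \<and>
      l dvd gcd (gcd ((k-4)*C - B*(k+5)) ((k+5)*E - C*6)) ((k-4)*E - B*6)"
    then have lp: "prime l" and l3: "l \<noteq> 3" and l2: "l \<noteq> 2" and lpp: "l \<noteq> p" by auto
    have d1: "l dvd (k-4)*C - B*(k+5)" and d2: "l dvd (k+5)*E - C*6" and d3: "l dvd (k-4)*E - B*6"
      using h by (meson gcd_dvd1 gcd_dvd2 dvd_trans)+
    have "l dvd (2 * 3^2) * (p * (1 - 3*L))" using d1 unfolding X1 by (simp add: mult.assoc)
    then have "l dvd 2 \<or> l dvd 3^2 \<or> l dvd p \<or> l dvd (1 - 3*L)"
      using lp by (simp only: prime_dvd_mult_iff) blast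
    then have "l dvd 2 \<or> l dvd 3 \<or> l dvd p \<or> l dvd (1 - 3*L)"
      using lp prime_dvd_power by blast
    moreover have "\<not> l dvd 2" using zdvd_imp_le[of l 2] prime_gt_1_int[OF lp] l2 by auto
    moreover have "\<not> l dvd 3" using zdvd_imp_le[of l 3] prime_gt_1_int[OF lp] l2 l3 by auto
    moreover have "\<not> l dvd p" using primes_dvd_imp_eq[OF lp pp] lpp by auto
    ultimately have d4: "l dvd 1 - 3*L" by blast
    have d5: "l dvd 27*(3*L-1)*(5 - 3*L) - 81" using dvd_diff[OF d2 d3] unfolding X23 .
    have d6: "l dvd 27*(3*L-1)*(5 - 3*L)"
    proof -
      have "l dvd 3*L - 1" using d4 by (metis dvd_minus_iff minus_diff_eq)
      then show ?thesis using dvd_mult2[OF dvd_mult[of l "3*L-1" 27], of "5 - 3*L"] by (simp only: mult.assoc)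
    qed
    have "l dvd 27*(3*L-1)*(5 - 3*L) - (27*(3*L-1)*(5 - 3*L) - 81)"
      using dvd_diff[OF d6 d5] .
    then have "l dvd 81" by simp
    then have "l dvd 3^4" by simp
    then have "l dvd 3" using lp prime_dvd_power by blast
    with \<open>\<not> l dvd 3\<close> show False by simp
  qed
  then show ?thesis unfolding A4_def sept_def Ak Dk B_def[symmetric] C_def[symmetric] E_def[symmetric]
    by (simp only: prod.case) blast
qed

lemma sA5: "A5 p (sept p L)"
proof -
  define A where "A = (p - 9) div 2"
  define B where "B = -18 + (27+3*p)*L"
  have "[3 - 9*L*(2 - 3*L) * 1^6 = 0] (mod p)" unfolding Emod by (simp add: cong_iff_dvd_diff power2_eq_square)
  moreover have "QNR p (A + z*B*1^4)" if z: "[z^3 = 1] (mod p)" for z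
  proof -
    have "[z = 1] (mod p)" using cube_root_one[OF pp p3 z p2] .
    then have dz: "p dvd z - 1" by (simp add: cong_iff_dvd_diff)
    have e: "2*(A + z*B) + 27 = p*(1 + 18*u + 6*L) + 2*B*(z - 1)"
    proof -
      have "2*A = p - 9" unfolding A_def using pk by simp
      then have "2*(A + z*B) + 27 = p - 9 + 2*z*(-18 + (27+3*p)*L) + 27" unfolding B_def by (simp add: algebra_simps)
      also have "\<dots> = p*(1 + 18*u + 6*L) + 2*B*(z - 1) + 18*(3*L - 1 - p*u)"
        unfolding B_def by (simp add: algebra_simps)
      finally show ?thesis using hu by simp
    qed
    have "p dvd 2*(A + z*B) + 27" unfolding e using dvd_add[OF dvd_triv_left dvd_mult[OF dz]] .
    then have "[2*(A + z*B) = -27] (mod p)" by (simp add: cong_iff_dvd_diff)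
    then show ?thesis using qnr_main[OF pp p8 p3] unfolding QNR_def by simp
  qed
  ultimately show ?thesis unfolding A5_def sept_def A_def[symmetric] B_def[symmetric] by blast
qed

lemma sA7: "A7 (sept p L)"
proof -
  have e: "(k - 4 + (-18 + (27+3*p)*L)) = k - 22 + 3*((9 + p)*L)" by (simp add: algebra_simps)
  have "k mod 3 = 2" using pk p3 by presburger
  then have "(k - 22 + 3*X) mod 3 = 1" for X :: int by presburger
  then have "(k - 4 + (-18 + (27+3*p)*L)) mod 3 = 1" unfolding e by blast
  then show ?thesis unfolding A7_def sept_def Ak by (simp add: cong_def)
qed

lemma prime3: "prime (3::int)"
  unfolding prime_int_iff'
proof (intro conjI ballI)
  fix n :: int assume "n \<in> {2..<3}"
  then have "n = 2" by auto
  then show "\<not> n dvd 3" by simp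
qed simp

lemma sA6: "n \<ge> 1 \<Longrightarrow> A6 n (sept p L)"
proof -
  assume n: "n \<ge> 1"
  have "multiplicity 3 (9*L*(2 - 3*L)) \<le> 4" using mult_E_le[OF prime3 Lp L2p] .
  then have "int (multiplicity 3 (9*L*(2 - 3*L))) - int (multiplicity 3 (3::int)) < 6 * int n"
    using n by linarith
  then show ?thesis unfolding A6_def sept_def by (simp only: prod.case)
qed

lemma sA2: "n \<ge> 1 \<Longrightarrow> A2 p n (sept p L)"
proof -
  assume n: "n \<ge> 1"
  have "int (multiplicity l (9*L*(2 - 3*L))) - int (multiplicity l (3::int)) < 6 * int n" if "prime l" for l
  proof -
    have "multiplicity l (9*L*(2 - 3*L)) \<le> 4" using mult_E_le[OF that Lp L2p] .
    then show ?thesis using n by linarith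
  qed
  then show ?thesis unfolding A2_def sept_def by (simp only: prod.case) blast
qed

lemma sParam: "param_form p (sept p L)"
proof -
  have "\<not> p dvd 3^2" using n3 pp prime_dvd_power by blast
  then have "coprime p 9" using prime_imp_coprime[OF pp] by simp
  then have "gcd p 9 = 1" by simp
  then obtain a b where ab: "a * p + b * 9 = 1" using bezout_int[of p 9] by auto
  have a0: "a \<noteq> 0"
  proof
    assume "a = 0"
    then have "b * 9 = 1" using ab by simp
    then show False by presburger
  qed
  have b0: "b \<noteq> 0"
  proof
    assume "b = 0"
    then have "p dvd 1" using ab by (metis add.right_neutral dvd_triv_right mult_zero_left)
    then show False using pp by auto
  qed
  have g1: "gcd p 3 = 1" using n3 prime_imp_coprime[OF pp] by simp
  have eq: "p*1^2*a + 9*1^2*b = 1" using ab by (simp add: algebra_simps)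
  have e2: "2*p*3^2*(b - a - 0*(p*1^2 + 9*1^2)) + (p*1^2 + 9*1^2)*(L - 6*b)*3 = -18 + (27+3*p)*L"
  proof -
    have "2*p*3^2*(b - a - 0*(p*1^2 + 9*1^2)) + (p*1^2 + 9*1^2)*(L - 6*b)*3 - (-18 + (27+3*p)*L) = -18*(a * p + b * 9 - 1)"
      by (simp add: algebra_simps power2_eq_square)
    then show ?thesis using ab by simp
  qed
  have e3: "2*p*3^2*(b + a - 0*(p*1^2 - 9*1^2)) + (p*1^2 - 9*1^2)*(L - 6*b)*3 = 18 + (3*p-27)*L"
  proof -
    have "2*p*3^2*(b + a - 0*(p*1^2 - 9*1^2)) + (p*1^2 - 9*1^2)*(L - 6*b)*3 - (18 + (3*p-27)*L) = 18*(a * p + b * 9 - 1)"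
      by (simp add: algebra_simps power2_eq_square)
    then show ?thesis using ab by simp
  qed
  have e5: "3*(2*p*3*(a + 9*0*1^2) - 9*1^2*(L - 6*b))*(2*3*(b - p*0*1^2) + 1^2*(L - 6*b)) = 9*L*(2 - 3*L)"
  proof -
    have "3*(2*p*3*(a + 9*0*1^2) - 9*1^2*(L - 6*b))*(2*3*(b - p*0*1^2) + 1^2*(L - 6*b)) - 9*L*(2 - 3*L) = 18*L*(a * p + b * 9 - 1)"
      by (simp add: algebra_simps power2_eq_square)
    then show ?thesis using ab by simp
  qed
  show ?thesis unfolding param_form_def
    apply (rule exI[of _ 1], rule exI[of _ 1], rule exI[of _ a], rule exI[of _ b],
           rule exI[of _ 0], rule exI[of _ "L - 6*b"], rule exI[of _ 3])
    using a0 b0 g1 eq e2 e3 e5 unfolding sept_def by simp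
qed

lemma sCp: "sept p L \<in> Cp p"
  unfolding Cp_def using sParam sA1 sA3 sA4 sA5 sA7 sA6 by blast

lemma sHyp: "n \<ge> 1 \<Longrightarrow> HypFM p n (sept p L)"
  unfolding HypFM_def using sA1 sA2 sA3 sA4 sA5 sA6 sA7 by (simp add: sept_def)

end


lemma lin_ok:
  fixes a b :: int
  assumes "b > 0"
  shows "degree [:a, b:] > 0 \<and> irreducible (map_poly (of_int :: int \<Rightarrow> rat) [:a, b:]) \<and> lead_coeff [:a, b:] > 0"
proof -
  have "map_poly (of_int :: int \<Rightarrow> rat) [:a, b:] = [:of_int a, of_int b:]" by (simp add: map_poly_pCons)
  moreover have "irreducible [:of_int a, of_int b :: rat:]" using assms by (intro irreducible_linear_field_poly) simp
  ultimately show ?thesis using assms by simp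
qed

theorem corollary9p6:
  fixes p :: int
  assumes "SchinzelH"
    and "prime p" and "[p = 1] (mod 8)" and "[p = 2] (mod 3)"
  shows "\<forall>n::nat. n \<ge> 1 \<longrightarrow> infinite {s \<in> Cp p. HypFM p n s}"
proof (intro allI impI)
  fix n :: nat assume n1: "n \<ge> 1"
  have pp: "prime p" by fact
  have p8: "p mod 8 = 1" using assms(3) by (simp add: cong_def)
  have p3: "p mod 3 = 2" using assms(4) by (simp add: cong_def)
  have p2: "2 < p" using pp p8 prime_gt_1_int[of p] by presburger
  define c0 where "c0 = (p+1) div 3"
  have c3: "3*c0 = p+1" unfolding c0_def using p3 by presburger
  define f1 where "f1 = [:p - 1, 3*p:]"
  define f2 where "f2 = [:c0, p:]"
  have pf1: "poly f1 y = p - 1 + 3*p*y" for y unfolding f1_def by (simp add: algebra_simps)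
  have pf2: "poly f2 y = c0 + p*y" for y unfolding f2_def by (simp add: algebra_simps)
  have H1: "\<forall>F \<in> set [f1, f2]. degree F > 0 \<and> irreducible (map_poly (of_int :: int \<Rightarrow> rat) F) \<and> lead_coeff F > 0"
    using lin_ok[of "3*p" "p - 1"] lin_ok[of p c0] p2 unfolding f1_def f2_def by simp
  have H2: "\<not> (\<exists>q::int. prime q \<and> (\<forall>m::int. q dvd (\<Prod>F\<leftarrow>[f1, f2]. poly F m)))"
  proof
    assume "\<exists>q::int. prime q \<and> (\<forall>m::int. q dvd (\<Prod>F\<leftarrow>[f1, f2]. poly F m))"
    then obtain q where qp: "prime q" and qd: "\<And>m. q dvd poly f1 m * poly f2 m" by auto
    show False
    proof (cases "q dvd p")
      case True
      then have "q = p" using primes_dvd_imp_eq[OF qp pp] by simp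
      then have "p dvd (p - 1) * c0" using qd[of 0] pf1 pf2 by simp
      then have "p dvd p - 1 \<or> p dvd c0" using pp by (simp add: prime_dvd_mult_iff)
      moreover have "\<not> p dvd p - 1"
      proof
        assume "p dvd p - 1"
        then have "p dvd p - (p - 1)" using dvd_diff[OF dvd_refl] by blast
        then show False using prime_gt_1_int[OF pp] by simp
      qed
      moreover have "\<not> p dvd c0"
      proof
        assume "p dvd c0"
        then have "p dvd 3*c0 - p" using dvd_diff[OF dvd_mult[of p c0 3] dvd_refl] by blast
        then show False using prime_gt_1_int[OF pp] c3 by simp
      qed
      ultimately show False by blast
    next
      case False
      then have "coprime p q" using prime_imp_coprime[OF qp] by (simp add: coprime_commute)
      then obtain i where "[p * i = 1] (mod q)" using cong_solve_coprime_int by blast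
      then have di: "q dvd p*i - 1" by (simp add: cong_iff_dvd_diff)
      define m where "m = i*(1 - c0)"
      have e2: "poly f2 m - 1 = (p*i - 1)*(1 - c0)" unfolding pf2 m_def by (simp add: algebra_simps)
      have e1: "poly f1 m - 1 = 3*(poly f2 m - 1)" unfolding pf1 pf2 using c3 by (simp add: algebra_simps)
      have d2: "q dvd poly f2 m - 1" unfolding e2 using dvd_mult2[OF di] .
      have d1: "q dvd poly f1 m - 1" unfolding e1 using dvd_mult[OF d2] .
      have e3: "poly f1 m * poly f2 m - 1 = (poly f1 m - 1) * poly f2 m + (poly f2 m - 1)"
        by (simp add: algebra_simps)
      have "q dvd poly f1 m * poly f2 m - 1" unfolding e3 using dvd_add[OF dvd_mult2[OF d1] d2] .
      then have "q dvd poly f1 m * poly f2 m - (poly f1 m * poly f2 m - 1)" using dvd_diff[OF qd[of m]] by blast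
      then show False using prime_gt_1_int[OF qp] by simp
    qed
  qed
  define Y where "Y = {x::int. x > 0 \<and> (\<forall>F \<in> set [f1, f2]. prime (poly F x))}"
  have infY: "infinite Y" using assms(1) H1 H2 unfolding SchinzelH_def Y_def by blast
  define g where "g y = sept p (c0 + p*y)" for y
  have sub: "g ` Y \<subseteq> {s \<in> Cp p. HypFM p n s}"
  proof
    fix s assume "s \<in> g ` Y"
    then obtain y where y: "y \<in> Y" "s = g y" by blast
    have L1: "prime (c0 + p*y)" using y pf2 unfolding Y_def by auto
    have L2: "prime (3*(c0 + p*y) - 2)"
    proof -
      have "3*(c0 + p*y) - 2 = poly f1 y" unfolding pf1 using c3 by (simp add: algebra_simps)
      then show ?thesis using y unfolding Y_def by auto
    qed
    have hu: "3*(c0 + p*y) = 1 + p*(1 + 3*y)" using c3 by (simp add: algebra_simps)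
    have pk: "p = 2*(p div 2) + 1" using p8 by presburger
    interpret G: goodL p "c0 + p*y" "1 + 3*y" "p div 2"
      using pp p8 p3 L1 L2 hu pk by unfold_locales
    show "s \<in> {s \<in> Cp p. HypFM p n s}" using G.sCp G.sHyp[OF n1] y unfolding g_def by simp
  qed
  have inj: "inj_on g Y"
  proof
    fix y1 y2 assume "y1 \<in> Y" "y2 \<in> Y" "g y1 = g y2"
    then have "-18 + (27+3*p)*(c0 + p*y1) = -18 + (27+3*p)*(c0 + p*y2)" unfolding g_def sept_def by simp
    then have "((27+3*p)*p)*y1 = ((27+3*p)*p)*y2" by (simp add: algebra_simps)
    moreover have "(27+3*p)*p \<noteq> 0" using p2 by simp
    ultimately show "y1 = y2" by simp
  qed
  show "infinite {s \<in> Cp p. HypFM p n s}"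
  proof
    assume "finite {s \<in> Cp p. HypFM p n s}"
    then have "finite (g ` Y)" using sub finite_subset by blast
    then have "finite Y" using inj finite_imageD by blast
    with infY show False by simp
  qed
qed


end
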